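(* Let $(G,\prec)$ be a POP-graph and let $v$ be an internal vertex of $G$ that is minimal, i.e. there is no internal vertex $v'\neq v$ with $v'\to v$. Then (1) $I(v)\subseteq I(G)$ and $I(v)$ is an interval of $(E(G),\prec)$; in particular $I(v)$ is an interval of $(I(G),\prec)$. (2) For every $h\in O(v)$ and $i\in I(G)\setminus I(v)$: $i\prec h$ iff $i\prec\min I(v)$, and $h\prec i$ iff $\max I(v)\prec i$.
   Context: A progressive graph is a finite directed acyclic graph (parallel edges allowed) in which every source and every sink has degree one; degree-one vertices are boundary vertices, the others internal. $I(G)$ is the set of input edges (edges whose initial vertex is a boundary vertex). For a vertex $v$, $I(v)$ and $O(v)$ are its incoming and outgoing edges. For edges write $e\to e'$ if $e\neq e'$ and there is a directed path whose first edge is $e$ and last edge is $e'$; for vertices $v'\to v$ means there is a directed path from $v'$ to $v$. A planar order on $G$ is a linear order $\prec$ on $E(G)$ such that (P1) $e_1\to e_2$ implies $e_1\prec e_2$; (P2) if $e_1\prec e_2\prec e_3$ and $e_1\to e_3$ then $e_1\to e_2$ or $e_2\to e_3$. A POP-graph is a progressive graph with a planar order. An interval of a linearly ordered set $(S,\prec)$ is a subset of the form $\{s: a\preceq s\preceq b\}$. *)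

theory Defs
  imports Main
begin

text \<open>A finite directed graph with parallel edges: vertex set V, edge set E,
  and source/target maps src, tgt on edges.\<close>

definition in_edges :: "'e set \<Rightarrow> ('e \<Rightarrow> 'v) \<Rightarrow> 'v \<Rightarrow> 'e set" where
  "in_edges E tgt v = {e \<in> E. tgt e = v}"

definition out_edges :: "'e set \<Rightarrow> ('e \<Rightarrow> 'v) \<Rightarrow> 'v \<Rightarrow> 'e set" where
  "out_edges E src v = {e \<in> E. src e = v}"

definition degree :: "'e set \<Rightarrow> ('e \<Rightarrow> 'v) \<Rightarrow> ('e \<Rightarrow> 'v) \<Rightarrow> 'v \<Rightarrow> nat" where
  "degree E src tgt v = card (in_edges E tgt v) + card (out_edges E src v)"

definition epath :: "'e set \<Rightarrow> ('e \<Rightarrow> 'v) \<Rightarrow> ('e \<Rightarrow> 'v) \<Rightarrow> 'e list \<Rightarrow> bool" where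
  "epath E src tgt es \<longleftrightarrow> es \<noteq> [] \<and> set es \<subseteq> E \<and>
     (\<forall>i. Suc i < length es \<longrightarrow> tgt (es ! i) = src (es ! Suc i))"

definition dag :: "'v set \<Rightarrow> 'e set \<Rightarrow> ('e \<Rightarrow> 'v) \<Rightarrow> ('e \<Rightarrow> 'v) \<Rightarrow> bool" where
  "dag V E src tgt \<longleftrightarrow> finite V \<and> finite E \<and>
     (\<forall>e\<in>E. src e \<in> V \<and> tgt e \<in> V) \<and>
     (\<forall>es. epath E src tgt es \<longrightarrow> src (hd es) \<noteq> tgt (last es))"

definition progressive :: "'v set \<Rightarrow> 'e set \<Rightarrow> ('e \<Rightarrow> 'v) \<Rightarrow> ('e \<Rightarrow> 'v) \<Rightarrow> bool" where
  "progressive V E src tgt \<longleftrightarrow> dag V E src tgt \<and>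
     (\<forall>v\<in>V. (in_edges E tgt v = {} \<longrightarrow> degree E src tgt v = 1) \<and>
            (out_edges E src v = {} \<longrightarrow> degree E src tgt v = 1))"

definition boundary :: "'v set \<Rightarrow> 'e set \<Rightarrow> ('e \<Rightarrow> 'v) \<Rightarrow> ('e \<Rightarrow> 'v) \<Rightarrow> 'v \<Rightarrow> bool" where
  "boundary V E src tgt v \<longleftrightarrow> v \<in> V \<and> degree E src tgt v = 1"

definition internal :: "'v set \<Rightarrow> 'e set \<Rightarrow> ('e \<Rightarrow> 'v) \<Rightarrow> ('e \<Rightarrow> 'v) \<Rightarrow> 'v \<Rightarrow> bool" where
  "internal V E src tgt v \<longleftrightarrow> v \<in> V \<and> degree E src tgt v \<noteq> 1"

definition input_edges :: "'v set \<Rightarrow> 'e set \<Rightarrow> ('e \<Rightarrow> 'v) \<Rightarrow> ('e \<Rightarrow> 'v) \<Rightarrow> 'e set" where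
  "input_edges V E src tgt = {e \<in> E. boundary V E src tgt (src e)}"

definition edge_reach :: "'e set \<Rightarrow> ('e \<Rightarrow> 'v) \<Rightarrow> ('e \<Rightarrow> 'v) \<Rightarrow> 'e \<Rightarrow> 'e \<Rightarrow> bool" where
  "edge_reach E src tgt e e' \<longleftrightarrow> e \<noteq> e' \<and>
     (\<exists>es. epath E src tgt es \<and> hd es = e \<and> last es = e')"

definition vertex_reach :: "'e set \<Rightarrow> ('e \<Rightarrow> 'v) \<Rightarrow> ('e \<Rightarrow> 'v) \<Rightarrow> 'v \<Rightarrow> 'v \<Rightarrow> bool" where
  "vertex_reach E src tgt v' v \<longleftrightarrow> v' = v \<or>
     (\<exists>es. epath E src tgt es \<and> src (hd es) = v' \<and> tgt (last es) = v)"

definition planar_order :: "'e set \<Rightarrow> ('e \<Rightarrow> 'v) \<Rightarrow> ('e \<Rightarrow> 'v) \<Rightarrow> ('e \<times> 'e) set \<Rightarrow> bool" where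
  "planar_order E src tgt P \<longleftrightarrow> P \<subseteq> E \<times> E \<and> strict_linear_order_on E P \<and>
     (\<forall>e1\<in>E. \<forall>e2\<in>E. edge_reach E src tgt e1 e2 \<longrightarrow> (e1, e2) \<in> P) \<and>
     (\<forall>e1\<in>E. \<forall>e2\<in>E. \<forall>e3\<in>E. (e1, e2) \<in> P \<and> (e2, e3) \<in> P \<and> edge_reach E src tgt e1 e3
        \<longrightarrow> edge_reach E src tgt e1 e2 \<or> edge_reach E src tgt e2 e3)"

definition pop_graph :: "'v set \<Rightarrow> 'e set \<Rightarrow> ('e \<Rightarrow> 'v) \<Rightarrow> ('e \<Rightarrow> 'v) \<Rightarrow> ('e \<times> 'e) set \<Rightarrow> bool" where
  "pop_graph V E src tgt P \<longleftrightarrow> progressive V E src tgt \<and> planar_order E src tgt P"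

definition is_interval :: "'e set \<Rightarrow> ('e \<times> 'e) set \<Rightarrow> 'e set \<Rightarrow> bool" where
  "is_interval A P S \<longleftrightarrow> (\<exists>a\<in>A. \<exists>b\<in>A.
     S = {s \<in> A. (a = s \<or> (a, s) \<in> P) \<and> (s = b \<or> (s, b) \<in> P)})"

definition ord_min :: "('e \<times> 'e) set \<Rightarrow> 'e set \<Rightarrow> 'e" where
  "ord_min P S = (THE a. a \<in> S \<and> (\<forall>b\<in>S. b \<noteq> a \<longrightarrow> (a, b) \<in> P))"

definition ord_max :: "('e \<times> 'e) set \<Rightarrow> 'e set \<Rightarrow> 'e" where
  "ord_max P S = (THE a. a \<in> S \<and> (\<forall>b\<in>S. b \<noteq> a \<longrightarrow> (b, a) \<in> P))"

end

theory Submission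
  imports Defs
begin

lemma ord_min_prop:
  assumes fin: "finite P" and tr: "trans P" and ir: "irrefl P" and tot: "total_on A P"
    and sub: "S \<subseteq> A" and ne: "S \<noteq> {}"
  shows "ord_min P S \<in> S \<and> (\<forall>b\<in>S. b \<noteq> ord_min P S \<longrightarrow> (ord_min P S, b) \<in> P)"
proof -
  have "acyclic P" using tr ir by (simp add: acyclic_irrefl trancl_id)
  then have wf: "wf P" using fin finite_acyclic_wf by blast
  obtain x where x: "x \<in> S" using ne by blast
  obtain z where z: "z \<in> S" "\<forall>y. (y, z) \<in> P \<longrightarrow> y \<notin> S" using wfE_min[OF wf x] by blast
  have zl: "\<forall>b\<in>S. b \<noteq> z \<longrightarrow> (z, b) \<in> P"
    using z tot sub unfolding total_on_def by blast
  have "ord_min P S = z" unfolding ord_min_def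
  proof (rule the_equality)
    show "z \<in> S \<and> (\<forall>b\<in>S. b \<noteq> z \<longrightarrow> (z, b) \<in> P)" using z zl by blast
  next
    fix a assume a: "a \<in> S \<and> (\<forall>b\<in>S. b \<noteq> a \<longrightarrow> (a, b) \<in> P)"
    show "a = z"
    proof (rule ccontr)
      assume "a \<noteq> z"
      then have "(a, z) \<in> P" using a z by (metis (no_types))
      then show False using z a by blast
    qed
  qed
  then show ?thesis using z zl by simp
qed

lemma ord_max_prop:
  assumes fin: "finite P" and tr: "trans P" and ir: "irrefl P" and tot: "total_on A P"
    and sub: "S \<subseteq> A" and ne: "S \<noteq> {}"
  shows "ord_max P S \<in> S \<and> (\<forall>b\<in>S. b \<noteq> ord_max P S \<longrightarrow> (b, ord_max P S) \<in> P)"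
proof -
  have "acyclic P" using tr ir by (simp add: acyclic_irrefl trancl_id)
  then have wf: "wf (P\<inverse>)" using fin finite_acyclic_wf_converse by blast
  obtain x where x: "x \<in> S" using ne by blast
  obtain z where z: "z \<in> S" "\<forall>y. (y, z) \<in> P\<inverse> \<longrightarrow> y \<notin> S" using wfE_min[OF wf x] by blast
  have zl: "\<forall>b\<in>S. b \<noteq> z \<longrightarrow> (b, z) \<in> P"
    using z tot sub unfolding total_on_def by blast
  have "ord_max P S = z" unfolding ord_max_def
  proof (rule the_equality)
    show "z \<in> S \<and> (\<forall>b\<in>S. b \<noteq> z \<longrightarrow> (b, z) \<in> P)" using z zl by blast
  next
    fix a assume a: "a \<in> S \<and> (\<forall>b\<in>S. b \<noteq> a \<longrightarrow> (b, a) \<in> P)"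
    show "a = z"
    proof (rule ccontr)
      assume "a \<noteq> z"
      then have "(z, a) \<in> P" using a z by (metis (no_types))
      then show False using z a by blast
    qed
  qed
  then show ?thesis using z zl by simp
qed

lemma epath_single: "e \<in> E \<Longrightarrow> epath E src tgt [e]"
  by (simp add: epath_def)

lemma epath_two: "a \<in> E \<Longrightarrow> b \<in> E \<Longrightarrow> tgt a = src b \<Longrightarrow> epath E src tgt [a, b]"
  by (auto simp: epath_def less_Suc_eq)

lemma epath_nth:
  assumes "epath E src tgt es" "Suc i < length es"
  shows "es ! i \<in> E \<and> es ! Suc i \<in> E \<and> tgt (es ! i) = src (es ! Suc i)"
  using assms unfolding epath_def by (meson Suc_lessD nth_mem subsetD)

lemma epath_cons_tl:
  assumes ep: "epath E src tgt es" and len: "length es \<ge> 2" and b: "b \<in> E"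
    and t: "tgt b = tgt (hd es)"
  shows "epath E src tgt (b # tl es)"
  unfolding epath_def
proof (intro conjI allI impI)
  show "b # tl es \<noteq> []" by simp
  show "set (b # tl es) \<subseteq> E" using ep b unfolding epath_def
    by (metis insert_subset list.set(2) list.set_sel(2) subset_code(1) tl_Nil)
  fix i assume i: "Suc i < length (b # tl es)"
  show "tgt ((b # tl es) ! i) = src ((b # tl es) ! Suc i)"
  proof (cases i)
    case 0
    have "hd es = es ! 0" using ep by (simp add: epath_def hd_conv_nth)
    then show ?thesis using 0 t epath_nth[OF ep, of 0] len by (simp add: nth_tl)
  next
    case (Suc j)
    then show ?thesis using epath_nth[OF ep, of "Suc j"] i by (simp add: nth_tl)
  qed
qed

lemma vr_mid:
  assumes ep: "epath E src tgt es" and len: "length es \<ge> 2"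
  shows "vertex_reach E src tgt (tgt (hd es)) (src (last es))"
proof -
  let ?n = "length es"
  have hd: "hd es = es!0" and lst: "last es = es!(?n - 1)"
    using ep by (auto simp: epath_def hd_conv_nth last_conv_nth)
  have st: "\<And>i. Suc i < ?n \<Longrightarrow> tgt (es!i) = src (es!Suc i)"
    using epath_nth[OF ep] by blast
  have inE: "\<And>i. i < ?n \<Longrightarrow> es!i \<in> E" using ep unfolding epath_def by (meson nth_mem subsetD)
  show ?thesis
  proof (cases "?n = 2")
    case True then show ?thesis using st[of 0] hd lst by (simp add: vertex_reach_def)
  next
    case False
    define ms where "ms = map (\<lambda>i. es ! Suc i) [0..<?n-2]"
    have lm: "length ms = ?n - 2" by (simp add: ms_def)
    have ms_nth: "\<And>i. i < ?n - 2 \<Longrightarrow> ms!i = es!Suc i" by (simp add: ms_def)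
    have n3: "?n \<ge> 3" using False len by arith
    have ne: "ms \<noteq> []" using n3 lm by auto
    have "epath E src tgt ms" unfolding epath_def
    proof (intro conjI allI impI)
      show "ms \<noteq> []" by fact
      show "set ms \<subseteq> E" using inE by (auto simp: ms_def)
      fix i assume "Suc i < length ms" then show "tgt (ms!i) = src (ms!Suc i)"
        using st[of "Suc i"] lm ms_nth by auto
    qed
    moreover have "src (hd ms) = tgt (hd es)"
      using ne hd_conv_nth[OF ne] ms_nth[of 0] st[of 0] hd n3 by auto
    moreover have "tgt (last ms) = src (last es)"
    proof -
      have e1: "Suc (?n-3) = ?n-2" "Suc (?n-2) = ?n-1" "length ms - 1 = ?n - 3" using n3 lm by arith+
      have "last ms = ms!(?n-3)" using last_conv_nth[OF ne] e1 by simp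
      also have "\<dots> = es!(?n-2)" using ms_nth[of "?n-3"] n3 e1 by simp
      finally show ?thesis using st[of "?n-2"] n3 e1 lst by simp
    qed
    ultimately show ?thesis unfolding vertex_reach_def by blast
  qed
qed

lemma deg2:
  assumes "finite E" "a \<in> E" "b \<in> E" "tgt a = w" "src b = w"
  shows "degree E src tgt w \<noteq> 1"
proof -
  have "card (in_edges E tgt w) > 0" using assms
    by (auto simp: in_edges_def card_gt_0_iff)
  moreover have "card (out_edges E src w) > 0" using assms
    by (auto simp: out_edges_def card_gt_0_iff)
  ultimately show ?thesis by (simp add: degree_def)
qed

theorem lemma3p5:
  fixes V :: "'v set" and E :: "'e set" and src tgt :: "'e \<Rightarrow> 'v"
    and P :: "('e \<times> 'e) set" and v :: 'v
  assumes pop: "pop_graph V E src tgt P"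
    and int: "internal V E src tgt v"
    and minimal: "\<forall>v'. internal V E src tgt v' \<and> v' \<noteq> v \<longrightarrow> \<not> vertex_reach E src tgt v' v"
  shows "in_edges E tgt v \<subseteq> input_edges V E src tgt
       \<and> is_interval E P (in_edges E tgt v)
       \<and> is_interval (input_edges V E src tgt) P (in_edges E tgt v)
       \<and> (\<forall>h \<in> out_edges E src v. \<forall>i \<in> input_edges V E src tgt - in_edges E tgt v.
           ((i, h) \<in> P \<longleftrightarrow> (i, ord_min P (in_edges E tgt v)) \<in> P) \<and>
           ((h, i) \<in> P \<longleftrightarrow> (ord_max P (in_edges E tgt v), i) \<in> P))"
proof -
  define Iv where "Iv = in_edges E tgt v"
  define Ov where "Ov = out_edges E src v"
  define IG where "IG = input_edges V E src tgt"
  have prog: "progressive V E src tgt" and pl: "planar_order E src tgt P"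
    using pop by (auto simp: pop_graph_def)
  have dg: "dag V E src tgt" using prog by (simp add: progressive_def)
  have finE: "finite E" and ends: "\<forall>e\<in>E. src e \<in> V \<and> tgt e \<in> V"
    and acyc: "\<forall>es. epath E src tgt es \<longrightarrow> src (hd es) \<noteq> tgt (last es)"
    using dg by (auto simp: dag_def)
  have PE: "P \<subseteq> E \<times> E" and tr: "trans P" and ir: "irrefl P" and tot: "total_on E P"
    and P1: "\<forall>e1\<in>E. \<forall>e2\<in>E. edge_reach E src tgt e1 e2 \<longrightarrow> (e1, e2) \<in> P"
    and P2: "\<forall>e1\<in>E. \<forall>e2\<in>E. \<forall>e3\<in>E. (e1, e2) \<in> P \<and> (e2, e3) \<in> P \<and> edge_reach E src tgt e1 e3
        \<longrightarrow> edge_reach E src tgt e1 e2 \<or> edge_reach E src tgt e2 e3"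
    using pl by (auto simp: planar_order_def strict_linear_order_on_def)
  have finP: "finite P" using PE finE finite_subset by blast
  have irr: "\<And>x. (x, x) \<notin> P" using ir by (simp add: irrefl_def)
  have asym: "\<And>x y. (x, y) \<in> P \<Longrightarrow> (y, x) \<notin> P" using tr irr by (meson transD)
  have tot': "\<And>x y. x \<in> E \<Longrightarrow> y \<in> E \<Longrightarrow> x \<noteq> y \<Longrightarrow> (x, y) \<in> P \<or> (y, x) \<in> P"
    using tot by (auto simp: total_on_def)
  have trP: "\<And>x y z. (x, y) \<in> P \<Longrightarrow> (y, z) \<in> P \<Longrightarrow> (x, z) \<in> P" using tr by (meson transD)
  have vV: "v \<in> V" and degv: "degree E src tgt v \<noteq> 1" using int by (auto simp: internal_def)
  have IvE: "Iv \<subseteq> E" and OvE: "Ov \<subseteq> E" by (auto simp: Iv_def Ov_def in_edges_def out_edges_def)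
  have Ivne: "Iv \<noteq> {}" using prog vV degv by (auto simp: progressive_def Iv_def)
  have Ovne: "Ov \<noteq> {}" using prog vV degv by (auto simp: progressive_def Ov_def)
  have selfloop: "\<And>e. e \<in> E \<Longrightarrow> src e \<noteq> tgt e"
    using acyc epath_single by fastforce
  have inIv: "\<And>e. e \<in> Iv \<longleftrightarrow> e \<in> E \<and> tgt e = v" by (simp add: Iv_def in_edges_def)
  have inOv: "\<And>e. e \<in> Ov \<longleftrightarrow> e \<in> E \<and> src e = v" by (simp add: Ov_def out_edges_def)
  have reachIO: "\<And>a h. a \<in> Iv \<Longrightarrow> h \<in> Ov \<Longrightarrow> (a, h) \<in> P"
  proof -
    fix a h assume a: "a \<in> Iv" and h: "h \<in> Ov"
    have "a \<noteq> h" using a h selfloop inIv inOv by metis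
    moreover have "epath E src tgt [a, h]" using a h inIv inOv epath_two by metis
    ultimately have "edge_reach E src tgt a h" unfolding edge_reach_def by force
    then show "(a, h) \<in> P" using P1 a h inIv inOv by blast
  qed
  have noreach: "\<And>s h. s \<in> E \<Longrightarrow> s \<notin> Iv \<Longrightarrow> h \<in> Ov \<Longrightarrow> \<not> edge_reach E src tgt s h"
  proof
    fix s h assume s: "s \<in> E" "s \<notin> Iv" and h: "h \<in> Ov" and er: "edge_reach E src tgt s h"
    obtain es where es: "epath E src tgt es" "hd es = s" "last es = h" "s \<noteq> h"
      using er unfolding edge_reach_def by blast
    have len: "length es \<ge> 2"
    proof (rule ccontr)
      assume "\<not> length es \<ge> 2"
      moreover have "es \<noteq> []" using es by (simp add: epath_def)
      ultimately have "length es = 1" by (metis One_nat_def Suc_le_eq le_neq_implies_less length_greater_0_conv less_2_cases_iff not_le)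
      then have "hd es = last es" by (cases es) auto
      then show False using es by simp
    qed
    have vr: "vertex_reach E src tgt (tgt s) v" using vr_mid[OF es(1) len] es h inOv by simp
    have e1: "es ! 1 \<in> E" "tgt (es ! 0) = src (es ! 1)" using epath_nth[OF es(1), of 0] len by auto
    have "hd es = es ! 0" using es by (simp add: epath_def hd_conv_nth)
    then have "degree E src tgt (tgt s) \<noteq> 1" using deg2[OF finE s(1) e1(1), where tgt=tgt and src=src and w="tgt s"] e1 es by simp
    then have "internal V E src tgt (tgt s)" using ends s by (simp add: internal_def)
    moreover have "tgt s \<noteq> v" using s inIv by blast
    ultimately show False using minimal vr by blast
  qed
  have sub: "Iv \<subseteq> IG"
  proof
    fix e assume e: "e \<in> Iv"
    have eE: "e \<in> E" and te: "tgt e = v" using e inIv by auto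
    have "\<not> internal V E src tgt (src e)"
    proof
      assume "internal V E src tgt (src e)"
      moreover have "src e \<noteq> v" using selfloop[OF eE] te by simp
      moreover have "vertex_reach E src tgt (src e) v"
        using epath_single[OF eE] te unfolding vertex_reach_def by fastforce
      ultimately show False using minimal by blast
    qed
    then have "boundary V E src tgt (src e)" using ends eE
      by (auto simp: internal_def boundary_def)
    then show "e \<in> IG" using eE by (simp add: IG_def input_edges_def)
  qed
  have IGE: "IG \<subseteq> E" by (auto simp: IG_def input_edges_def)
  define m where "m = ord_min P Iv"
  define M where "M = ord_max P Iv"
  have m: "m \<in> Iv" "\<forall>b\<in>Iv. b \<noteq> m \<longrightarrow> (m, b) \<in> P"
    using ord_min_prop[OF finP tr ir tot IvE Ivne] by (simp_all add: m_def)
  have M: "M \<in> Iv" "\<forall>b\<in>Iv. b \<noteq> M \<longrightarrow> (b, M) \<in> P"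
    using ord_max_prop[OF finP tr ir tot IvE Ivne] by (simp_all add: M_def)
  obtain h0 where h0: "h0 \<in> Ov" using Ovne by blast
  have between: "\<And>s. s \<in> E \<Longrightarrow> (m = s \<or> (m, s) \<in> P) \<Longrightarrow> (s = M \<or> (s, M) \<in> P) \<Longrightarrow> s \<in> Iv"
  proof (rule ccontr)
    fix s assume sE: "s \<in> E" and ms: "m = s \<or> (m, s) \<in> P" and sM: "s = M \<or> (s, M) \<in> P"
      and ns: "s \<notin> Iv"
    have ms': "(m, s) \<in> P" using ms ns m by blast
    have sM': "(s, M) \<in> P" using sM ns M by blast
    have sh: "(s, h0) \<in> P" using trP[OF sM' reachIO[OF M(1) h0]] .
    have "edge_reach E src tgt m h0"
    proof -
      have "m \<noteq> h0" using ms' sh asym irr by (metis trP)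
      moreover have "epath E src tgt [m, h0]" using m h0 inIv inOv epath_two by metis
      ultimately show ?thesis unfolding edge_reach_def by force
    qed
    then have "edge_reach E src tgt m s \<or> edge_reach E src tgt s h0"
      using P2 ms' sh m(1) h0 sE inIv inOv by blast
    moreover have "\<not> edge_reach E src tgt s h0" using noreach sE ns h0 by blast
    ultimately have ers: "edge_reach E src tgt m s" by blast
    obtain es where es: "epath E src tgt es" "hd es = m" "last es = s" "m \<noteq> s"
      using ers unfolding edge_reach_def by blast
    have len: "length es \<ge> 2"
    proof (rule ccontr)
      assume "\<not> length es \<ge> 2"
      moreover have "es \<noteq> []" using es by (simp add: epath_def)
      ultimately have "length es = 1" by (metis One_nat_def Suc_le_eq le_neq_implies_less length_greater_0_conv less_2_cases_iff not_le)
      then have "hd es = last es" by (cases es) auto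
      then show False using es by simp
    qed
    have "epath E src tgt (M # tl es)"
      using epath_cons_tl[OF es(1) len] M m inIv es by auto
    moreover have "last (M # tl es) = s" using es len by (cases es) auto
    moreover have "M \<noteq> s" using M ns by blast
    ultimately have "edge_reach E src tgt M s" unfolding edge_reach_def by force
    then have "(M, s) \<in> P" using P1 M inIv sE by blast
    then show False using sM' asym by blast
  qed
  have intE: "Iv = {s \<in> E. (m = s \<or> (m, s) \<in> P) \<and> (s = M \<or> (s, M) \<in> P)}"
  proof
    show "Iv \<subseteq> {s \<in> E. (m = s \<or> (m, s) \<in> P) \<and> (s = M \<or> (s, M) \<in> P)}"
      using m M IvE by fastforce
    show "{s \<in> E. (m = s \<or> (m, s) \<in> P) \<and> (s = M \<or> (s, M) \<in> P)} \<subseteq> Iv"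
      using between by blast
  qed
  have int1: "is_interval E P Iv" unfolding is_interval_def
    using intE m(1) M(1) IvE by blast
  have intIG: "Iv = {s \<in> IG. (m = s \<or> (m, s) \<in> P) \<and> (s = M \<or> (s, M) \<in> P)}"
    using intE sub IGE by blast
  have int2: "is_interval IG P Iv" unfolding is_interval_def
    using intIG m(1) M(1) sub by blast
  have p2: "\<forall>h\<in>Ov. \<forall>i\<in>IG - Iv. ((i, h) \<in> P \<longleftrightarrow> (i, m) \<in> P) \<and> ((h, i) \<in> P \<longleftrightarrow> (M, i) \<in> P)"
  proof (intro ballI)
    fix h i assume h: "h \<in> Ov" and i: "i \<in> IG - Iv"
    have iE: "i \<in> E" and iIv: "i \<notin> Iv" using i IGE by auto
    have bi: "boundary V E src tgt (src i)" using i by (simp add: IG_def input_edges_def)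
    have hE: "h \<in> E" using h inOv by simp
    have mh: "(m, h) \<in> P" using reachIO[OF m(1) h] .
    have Mh: "(M, h) \<in> P" using reachIO[OF M(1) h] .
    have A: "(i, h) \<in> P \<longleftrightarrow> (i, m) \<in> P"
    proof
      assume ih: "(i, h) \<in> P"
      show "(i, m) \<in> P"
      proof (rule ccontr)
        assume nim: "(i, m) \<notin> P"
        have "i \<noteq> m" using iIv m by blast
        then have mi: "(m, i) \<in> P" using tot' iE m(1) IvE nim by blast
        have "edge_reach E src tgt m h"
        proof -
          have "m \<noteq> h" using mh irr by blast
          moreover have "epath E src tgt [m, h]" using m h inIv inOv epath_two by metis
          ultimately show ?thesis unfolding edge_reach_def by force
        qed
        then have "edge_reach E src tgt m i \<or> edge_reach E src tgt i h"
          using P2 mi ih m(1) IvE hE iE by blast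
        moreover have "\<not> edge_reach E src tgt i h" using noreach iE iIv h by blast
        ultimately have "edge_reach E src tgt m i" by blast
        then obtain es where es: "epath E src tgt es" "hd es = m" "last es = i" "m \<noteq> i"
          unfolding edge_reach_def by blast
        have len: "length es \<ge> 2"
        proof (rule ccontr)
          assume "\<not> length es \<ge> 2"
          moreover have "es \<noteq> []" using es by (simp add: epath_def)
          ultimately have "length es = 1" by (metis One_nat_def Suc_le_eq le_neq_implies_less length_greater_0_conv less_2_cases_iff not_le)
          then have "hd es = last es" by (cases es) auto
          then show False using es by simp
        qed
        have ne: "es \<noteq> []" using es by (simp add: epath_def)
        have "es ! (length es - 2) \<in> E \<and> es ! Suc (length es - 2) \<in> E \<and>
              tgt (es ! (length es - 2)) = src (es ! Suc (length es - 2))"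
          using epath_nth[OF es(1), of "length es - 2"] len by auto
        moreover have "Suc (length es - 2) = length es - 1" using len by arith
        moreover have "last es = es ! (length es - 1)" using last_conv_nth[OF ne] .
        ultimately have "degree E src tgt (src i) \<noteq> 1"
          using deg2[OF finE, of "es ! (length es - 2)" i tgt "src i" src] iE es by simp
        then show False using bi by (simp add: boundary_def)
      qed
    next
      assume "(i, m) \<in> P" then show "(i, h) \<in> P" using mh trP by blast
    qed
    have B: "(h, i) \<in> P \<longleftrightarrow> (M, i) \<in> P"
    proof
      assume "(h, i) \<in> P" then show "(M, i) \<in> P" using Mh trP by blast
    next
      assume Mi: "(M, i) \<in> P"
      show "(h, i) \<in> P"
      proof (rule ccontr)
        assume nhi: "(h, i) \<notin> P"
        have "i \<noteq> h" using bi h inOv int by (auto simp: boundary_def internal_def)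
        then have "(i, h) \<in> P" using tot' iE hE nhi by blast
        then have im: "(i, m) \<in> P" using A by blast
        have "(m, i) \<in> P"
        proof (cases "m = M")
          case True then show ?thesis using Mi by simp
        next
          case False then show ?thesis using M m Mi trP by blast
        qed
        then show False using im asym by blast
      qed
    qed
    show "((i, h) \<in> P \<longleftrightarrow> (i, m) \<in> P) \<and> ((h, i) \<in> P \<longleftrightarrow> (M, i) \<in> P)" using A B by blast
  qed
  show ?thesis using sub int1 int2 p2
    unfolding Iv_def[symmetric] Ov_def[symmetric] IG_def[symmetric] m_def M_def by blast
qed

end
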